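(* Let $(t_1,s_1),(t_2,s_2)\in\mathbb{C}^\times\times\mathbb{C}^\times$ with $t_1\ne t_2$ and $s_1\neq s_2$, let $X_1=A_2(t_1,s_1)$, $X_2=A_2(t_2,s_2)$, let $\varepsilon_0=\det(X_1)+\det(X_2)-\det(X_1+X_2)$, and for $k\in\mathbb{N}$ let $\mathfrak{X}_k=(X_1X_2)^k+(X_2X_1)^k$. Then $\mathfrak{X}_1=\varepsilon_0 I_2$, $\mathfrak{X}_2=(\varepsilon_0^2-2)I_2$, and $\mathfrak{X}_n=\varepsilon_0\mathfrak{X}_{n-1}-\mathfrak{X}_{n-2}$ for all $n\ge3$.
   Context: $\mathbb{C}^\times=\mathbb{C}\setminus\{0\}$; $A_2(t,s)=\begin{pmatrix} t & s\\ \frac{1-t^2}{s} & -t\end{pmatrix}$; $I_2$ is the $2\times 2$ identity matrix. *)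

theory Defs
  imports "HOL-Analysis.Analysis"
begin


definition A2 :: "complex \<Rightarrow> complex \<Rightarrow> complex^2^2" where
  "A2 t s = vector [vector [t, s], vector [(1 - t^2) / s, - t]]"

abbreviation I2 :: "complex^2^2" where
  "I2 \<equiv> mat 1"

text \<open>Matrix power with respect to matrix multiplication (note: the operator
  \<open>^\<close> on \<open>'a^'n^'m\<close> is the componentwise power, not the matrix power).\<close>
primrec matpow :: "'a::semiring_1^'n^'n \<Rightarrow> nat \<Rightarrow> 'a^'n^'n" where
  "matpow M 0 = mat 1"
| "matpow M (Suc k) = M ** matpow M k"

end

theory Submission
  imports Defs
begin

lemma matpow_Suc_right: "matpow (M::'a::comm_ring_1^'n^'n) (Suc k) = matpow M k ** M"
  by (induction k) (simp_all add: matrix_mul_assoc matrix_mul_lid matrix_mul_rid)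

lemma matrix_add_rdistrib: "((A::'a::semiring_1^'n^'m) + B) ** (C::'a^'p^'n) = A ** C + B ** C"
  by (simp add: matrix_matrix_mult_def vec_eq_iff distrib_right sum.distrib)

lemma rec_gen:
  fixes P Q :: "complex^2^2"
  assumes PQ: "P ** Q = mat 1" and QP: "Q ** P = mat 1" and S: "P + Q = mat e"
  shows "matpow P (Suc (Suc m)) + matpow Q (Suc (Suc m)) =
     mat e ** (matpow P (Suc m) + matpow Q (Suc m)) - (matpow P m + matpow Q m)"
proof -
  have a: "P ** matpow Q (Suc m) = matpow Q m"
    by (metis matrix_mul_assoc matrix_mul_lid PQ matpow.simps(2))
  have b: "Q ** matpow P (Suc m) = matpow P m"
    by (metis matrix_mul_assoc matrix_mul_lid QP matpow.simps(2))
  have "mat e ** (matpow P (Suc m) + matpow Q (Suc m)) = (P + Q) ** (matpow P (Suc m) + matpow Q (Suc m))"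
    using S by simp
  also have "\<dots> = matpow P (Suc (Suc m)) + matpow Q (Suc (Suc m)) + (matpow P m + matpow Q m)"
    by (simp add: matrix_add_ldistrib matrix_add_rdistrib a[simplified] b[simplified] algebra_simps)
  finally show ?thesis by simp
qed

definition M2 :: "complex \<Rightarrow> complex \<Rightarrow> complex \<Rightarrow> complex^2^2" where
  "M2 a b c = vector [vector [a, b], vector [c, - a]]"
lemma A2_M2: "A2 t s = M2 t s ((1 - t^2)/s)" by (simp add: A2_def M2_def)
lemma sq: "a*a + b*c = 1 \<Longrightarrow> M2 a b c ** M2 a b c = mat 1"
  by (simp add: M2_def vec_eq_iff forall_2 matrix_matrix_mult_def sum_2 mat_def algebra_simps)
lemma sm: "M2 a b c ** M2 p q r + M2 p q r ** M2 a b c =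
   mat (det (M2 a b c) + det (M2 p q r) - det (M2 a b c + M2 p q r))"
  by (simp add: M2_def vec_eq_iff forall_2 matrix_matrix_mult_def sum_2 mat_def det_2 algebra_simps)
lemma A2_sq: "s \<noteq> 0 \<Longrightarrow> A2 t s ** A2 t s = mat 1"
  unfolding A2_M2 by (rule sq) (simp add: field_simps power2_eq_square)

theorem mainTheorem8:
  fixes t1 s1 t2 s2 :: complex
  assumes "t1 \<noteq> 0" "s1 \<noteq> 0" "t2 \<noteq> 0" "s2 \<noteq> 0"
    and "t1 \<noteq> t2" "s1 \<noteq> s2"
  defines "X1 \<equiv> A2 t1 s1" and "X2 \<equiv> A2 t2 s2"
  defines "eps0 \<equiv> det X1 + det X2 - det (X1 + X2)"
  defines "XX \<equiv> (\<lambda>k::nat. matpow (X1 ** X2) k + matpow (X2 ** X1) k)"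
  shows "XX 1 = mat eps0 \<and> XX 2 = mat (eps0^2 - 2) \<and>
    (\<forall>n\<ge>3. XX n = mat eps0 ** XX (n - 1) - XX (n - 2))"
proof -
  have s1: "X1 ** X1 = mat 1" unfolding X1_def using assms(2) by (rule A2_sq)
  have s2: "X2 ** X2 = mat 1" unfolding X2_def using assms(4) by (rule A2_sq)
  have PQ: "(X1 ** X2) ** (X2 ** X1) = mat 1"
    by (simp add: matrix_mul_assoc) (simp add: matrix_mul_assoc[symmetric] s2 matrix_mul_rid s1)
  have QP: "(X2 ** X1) ** (X1 ** X2) = mat 1"
    by (simp add: matrix_mul_assoc) (simp add: matrix_mul_assoc[symmetric] s2 matrix_mul_rid s1)
  have S: "X1 ** X2 + X2 ** X1 = mat eps0"
    unfolding X1_def X2_def eps0_def A2_M2 by (rule sm)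
  have R: "\<And>m. XX (Suc (Suc m)) = mat eps0 ** XX (Suc m) - XX m"
    unfolding XX_def by (rule rec_gen[OF PQ QP S])
  have X1: "XX 1 = mat eps0" using S by (simp add: XX_def matrix_mul_rid)
  have X0: "XX 0 = mat 2" by (simp add: XX_def mat_def vec_eq_iff)
  have "XX 2 = mat eps0 ** mat eps0 - mat 2"
    using R[of 0] X1 X0 by (simp add: numeral_2_eq_2)
  also have "\<dots> = mat (eps0^2 - 2)"
    by (simp add: vec_eq_iff mat_def matrix_matrix_mult_def sum_2 forall_2 power2_eq_square)
  finally have X2: "XX 2 = mat (eps0^2 - 2)" .
  have "\<forall>n\<ge>3. XX n = mat eps0 ** XX (n - 1) - XX (n - 2)"
  proof (intro allI impI)
    fix n :: nat assume "n \<ge> 3"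
    then obtain m where "n = Suc (Suc m)" using Suc_diff_le[of 2 n] by (intro that[of "n - 2"]) simp
    then show "XX n = mat eps0 ** XX (n - 1) - XX (n - 2)" using R by simp
  qed
  with X1 X2 show ?thesis by simp
qed

end
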